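(* Let $n>2$ and $q>0$ be integers such that $n$ is even or $q$ is odd. Then for every prime $p>\max\{n,(q-1)n+1\}$, $$ p^n\sum_{k=0}^{p-1}\frac{(1)_k^n}{(\frac{p}{n}-q+2)_k^n}\equiv0\pmod{p^3}. $$
   Context: $(x)_k$ denotes the Pochhammer symbol: $(x)_0=1$ and $(x)_k=x(x+1)\cdots(x+k-1)$ for $k>0$. A congruence between rational numbers modulo $p^m$ means their difference lies in $p^m\mathbb{Z}_{(p)}$, where $\mathbb{Z}_{(p)}$ is the ring of rationals whose denominators are coprime to $p$. *)

theory Defs
  imports Complex_Main "HOL-Computational_Algebra.Primes"
begin

definition in_Zp :: "nat \<Rightarrow> rat \<Rightarrow> bool" where
  "in_Zp p x \<longleftrightarrow> (\<exists>a b::int. \<not> (int p dvd b) \<and> x = of_int a / of_int b)"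

definition rat_cong :: "rat \<Rightarrow> rat \<Rightarrow> nat \<Rightarrow> nat \<Rightarrow> bool" where
  "rat_cong x y p m \<longleftrightarrow> (\<exists>z. in_Zp p z \<and> x - y = (of_nat p) ^ m * z)"

end

theory Submission
  imports Defs "HOL-Computational_Algebra.Polynomial"
begin

lemma Zp_of_int: "prime p \<Longrightarrow> in_Zp p (of_int a)"
  unfolding in_Zp_def
  by (rule exI[of _ a], rule exI[of _ 1]) (auto simp: prime_gt_1_nat)

lemma Zp_0: "prime p \<Longrightarrow> in_Zp p 0" using Zp_of_int[of p 0] by simp
lemma Zp_1: "prime p \<Longrightarrow> in_Zp p 1" using Zp_of_int[of p 1] by simp
lemma Zp_of_nat: "prime p \<Longrightarrow> in_Zp p (of_nat a)" using Zp_of_int[of p "int a"] by simp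

lemma prime_int_not_dvd_mult:
  assumes "prime p" "\<not> int p dvd a" "\<not> int p dvd b" shows "\<not> int p dvd (a*b)"
  using assms by (simp add: prime_dvd_mult_iff)

lemma Zp_add: assumes "prime p" "in_Zp p x" "in_Zp p y" shows "in_Zp p (x + y)"
proof -
  obtain a b where ab: "\<not> int p dvd b" "x = of_int a / of_int b" using assms(2) unfolding in_Zp_def by blast
  obtain c d where cd: "\<not> int p dvd d" "y = of_int c / of_int d" using assms(3) unfolding in_Zp_def by blast
  have b0: "b \<noteq> 0" "d \<noteq> 0" using ab cd by auto
  have "x + y = of_int (a*d + c*b) / of_int (b*d)" using b0 ab cd by (simp add: field_simps)
  moreover have "\<not> int p dvd (b*d)" using prime_int_not_dvd_mult assms ab cd by blast
  ultimately show ?thesis unfolding in_Zp_def by blast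
qed

lemma Zp_mult: assumes "prime p" "in_Zp p x" "in_Zp p y" shows "in_Zp p (x * y)"
proof -
  obtain a b where ab: "\<not> int p dvd b" "x = of_int a / of_int b" using assms(2) unfolding in_Zp_def by blast
  obtain c d where cd: "\<not> int p dvd d" "y = of_int c / of_int d" using assms(3) unfolding in_Zp_def by blast
  have "x * y = of_int (a*c) / of_int (b*d)" using ab cd by (simp add: field_simps)
  moreover have "\<not> int p dvd (b*d)" using prime_int_not_dvd_mult assms ab cd by blast
  ultimately show ?thesis unfolding in_Zp_def by blast
qed

lemma Zp_uminus: assumes "in_Zp p x" shows "in_Zp p (- x)"
proof -
  obtain a b where ab: "\<not> int p dvd b" "x = of_int a / of_int b" using assms unfolding in_Zp_def by blast
  have "- x = of_int (-a) / of_int b" using ab by simp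
  thus ?thesis using ab unfolding in_Zp_def by blast
qed

lemma Zp_diff: "prime p \<Longrightarrow> in_Zp p x \<Longrightarrow> in_Zp p y \<Longrightarrow> in_Zp p (x - y)"
  using Zp_add[of p x "-y"] Zp_uminus[of p y] by simp

lemma Zp_div_int: assumes "prime p" "in_Zp p x" "\<not> int p dvd c" shows "in_Zp p (x / of_int c)"
proof -
  obtain a b where ab: "\<not> int p dvd b" "x = of_int a / of_int b" using assms(2) unfolding in_Zp_def by blast
  have "c \<noteq> 0" using assms by auto
  then have "x / of_int c = of_int a / of_int (b*c)" using ab by (simp add: field_simps)
  moreover have "\<not> int p dvd (b*c)" using prime_int_not_dvd_mult assms ab by blast
  ultimately show ?thesis unfolding in_Zp_def by blast
qed

lemma Zp_sum: "prime p \<Longrightarrow> (\<And>i. i \<in> A \<Longrightarrow> in_Zp p (f i)) \<Longrightarrow> in_Zp p (\<Sum>i\<in>A. f i)"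
  by (induction A rule: infinite_finite_induct) (auto simp: Zp_0 Zp_add)

lemma Zp_prod: "prime p \<Longrightarrow> (\<And>i. i \<in> A \<Longrightarrow> in_Zp p (f i)) \<Longrightarrow> in_Zp p (\<Prod>i\<in>A. f i)"
  by (induction A rule: infinite_finite_induct) (auto simp: Zp_1 Zp_mult)

lemma Zp_power: "prime p \<Longrightarrow> in_Zp p x \<Longrightarrow> in_Zp p (x ^ k)"
  by (induction k) (auto simp: Zp_1 Zp_mult)

definition punit :: "nat \<Rightarrow> rat \<Rightarrow> bool" where
  "punit p x \<longleftrightarrow> in_Zp p x \<and> in_Zp p (inverse x) \<and> x \<noteq> 0"

lemma punit_int: "prime p \<Longrightarrow> \<not> int p dvd a \<Longrightarrow> punit p (of_int a)"
  unfolding punit_def using Zp_of_int[of p a] Zp_div_int[of p 1 a] Zp_1[of p]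
  by (auto simp: divide_inverse)

lemma punit_1: "prime p \<Longrightarrow> punit p 1"
  unfolding punit_def using Zp_1 by auto

lemma punit_mult: "prime p \<Longrightarrow> punit p x \<Longrightarrow> punit p y \<Longrightarrow> punit p (x*y)"
  unfolding punit_def by (auto simp: Zp_mult)

lemma punit_inverse: "punit p x \<Longrightarrow> punit p (inverse x)"
  unfolding punit_def by auto

lemma punit_prod: "prime p \<Longrightarrow> (\<And>i. i \<in> A \<Longrightarrow> punit p (f i)) \<Longrightarrow> punit p (\<Prod>i\<in>A. f i)"
  by (induction A rule: infinite_finite_induct) (auto simp: punit_mult punit_1)

lemma punit_power: "prime p \<Longrightarrow> punit p x \<Longrightarrow> punit p (x ^ k)"
  by (induction k) (auto simp: punit_mult punit_1)

definition pdvd :: "nat \<Rightarrow> nat \<Rightarrow> rat \<Rightarrow> bool" where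
  "pdvd p k x \<longleftrightarrow> (\<exists>z. in_Zp p z \<and> x = of_nat p ^ k * z)"

lemma pdvd_0: "pdvd p 0 x \<longleftrightarrow> in_Zp p x" unfolding pdvd_def by auto

lemma pdvd_zero: "prime p \<Longrightarrow> pdvd p k 0" unfolding pdvd_def using Zp_0 by force

lemma pdvd_add: "prime p \<Longrightarrow> pdvd p k x \<Longrightarrow> pdvd p k y \<Longrightarrow> pdvd p k (x + y)"
  unfolding pdvd_def by (metis Zp_add distrib_left)

lemma pdvd_uminus: "pdvd p k x \<Longrightarrow> pdvd p k (- x)"
  unfolding pdvd_def by (metis Zp_uminus mult_minus_right)

lemma pdvd_diff: "prime p \<Longrightarrow> pdvd p k x \<Longrightarrow> pdvd p k y \<Longrightarrow> pdvd p k (x - y)"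
  using pdvd_add[of p k x "-y"] pdvd_uminus[of p k y] by simp

lemma pdvd_sum: "prime p \<Longrightarrow> (\<And>i. i \<in> A \<Longrightarrow> pdvd p k (f i)) \<Longrightarrow> pdvd p k (\<Sum>i\<in>A. f i)"
  by (induction A rule: infinite_finite_induct) (auto simp: pdvd_zero pdvd_add)

lemma pdvd_mult: assumes "prime p" "pdvd p j x" "pdvd p k y" shows "pdvd p (j+k) (x * y)"
proof -
  obtain z w where "in_Zp p z" "x = of_nat p ^ j * z" "in_Zp p w" "y = of_nat p ^ k * w"
    using assms unfolding pdvd_def by blast
  then show ?thesis unfolding pdvd_def
    by (intro exI[of _ "z*w"]) (auto simp: Zp_mult assms power_add)
qed

lemma pdvd_multZ: "prime p \<Longrightarrow> pdvd p k x \<Longrightarrow> in_Zp p y \<Longrightarrow> pdvd p k (x * y)"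
  using pdvd_mult[of p k x 0 y] by (simp add: pdvd_0)

lemma pdvd_multZ': "prime p \<Longrightarrow> pdvd p k x \<Longrightarrow> in_Zp p y \<Longrightarrow> pdvd p k (y * x)"
  using pdvd_multZ[of p k x y] by (simp add: mult.commute)

lemma pdvd_mono: assumes "prime p" "j \<le> k" "pdvd p k x" shows "pdvd p j x"
proof -
  obtain z where z: "in_Zp p z" "x = of_nat p ^ k * z" using assms unfolding pdvd_def by blast
  have "x = of_nat p ^ j * (of_nat p ^ (k - j) * z)"
    using z assms(2) by (simp add: power_add[symmetric] mult.assoc[symmetric])
  moreover have "in_Zp p (of_nat p ^ (k - j) * z)"
    using Zp_mult[OF assms(1) Zp_power[OF assms(1) Zp_of_nat[OF assms(1)]] z(1)] by blast
  ultimately show ?thesis unfolding pdvd_def by blast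
qed

lemma pdvd_Zp: "prime p \<Longrightarrow> pdvd p k x \<Longrightarrow> in_Zp p x"
  using pdvd_mono[of p 0 k x] by (simp add: pdvd_0)

lemma pdvd_p: "prime p \<Longrightarrow> pdvd p 1 (of_nat p)"
  unfolding pdvd_def using Zp_1 by force

lemma pdvd_pow: "prime p \<Longrightarrow> pdvd p k x \<Longrightarrow> pdvd p (k*m) (x ^ m)"
  by (induction m) (auto simp: pdvd_0 Zp_1 pdvd_mult add.commute)

lemma pdvd_p_pow: "prime p \<Longrightarrow> pdvd p k (of_nat p ^ k)"
  using pdvd_pow[OF _ pdvd_p, of p k] by simp

definition pint :: "nat \<Rightarrow> rat poly \<Rightarrow> bool" where
  "pint p f \<longleftrightarrow> (\<forall>i. in_Zp p (coeff f i))"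

context
  fixes p :: nat assumes pp: "prime p"
begin

lemma pint_0: "pint p 0" unfolding pint_def using Zp_0[OF pp] by simp

lemma pint_pCons: "in_Zp p a \<Longrightarrow> pint p f \<Longrightarrow> pint p (pCons a f)"
  unfolding pint_def by (auto simp: coeff_pCons split: nat.splits)

lemma pint_pCons_tail: "pint p (pCons a f) \<Longrightarrow> pint p f"
  unfolding pint_def by (metis coeff_pCons_Suc)

lemma pint_pCons_head: "pint p (pCons a f) \<Longrightarrow> in_Zp p a"
  unfolding pint_def by (metis coeff_pCons_0)

lemma pint_const: "in_Zp p c \<Longrightarrow> pint p [:c:]"
  by (rule pint_pCons, auto simp: pint_0)

lemma pint_add: "pint p f \<Longrightarrow> pint p g \<Longrightarrow> pint p (f + g)"
  unfolding pint_def by (simp add: Zp_add[OF pp])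

lemma pint_uminus: "pint p f \<Longrightarrow> pint p (- f)"
  unfolding pint_def by (simp add: Zp_uminus)

lemma pint_diff: "pint p f \<Longrightarrow> pint p g \<Longrightarrow> pint p (f - g)"
  unfolding pint_def by (simp add: Zp_diff[OF pp])

lemma pint_smult: "in_Zp p c \<Longrightarrow> pint p f \<Longrightarrow> pint p (smult c f)"
  unfolding pint_def by (simp add: Zp_mult[OF pp])

lemma pint_mult: "pint p f \<Longrightarrow> pint p g \<Longrightarrow> pint p (f * g)"
  unfolding pint_def coeff_mult by (auto intro!: Zp_sum[OF pp] Zp_mult[OF pp])

lemma pint_1: "pint p 1"
  using pint_const[OF Zp_1[OF pp]] by (simp add: one_pCons)

lemma pint_power: "pint p f \<Longrightarrow> pint p (f ^ k)"
  by (induction k) (auto simp: pint_1 pint_mult)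

lemma pint_prod: "(\<And>i. i \<in> A \<Longrightarrow> pint p (f i)) \<Longrightarrow> pint p (\<Prod>i\<in>A. f i)"
  by (induction A rule: infinite_finite_induct) (auto simp: pint_1 pint_mult)

lemma pint_monom: "in_Zp p c \<Longrightarrow> pint p (monom c k)"
  unfolding pint_def by (auto simp: coeff_monom Zp_0[OF pp])

lemma pint_pcompose: "pint p f \<Longrightarrow> pint p g \<Longrightarrow> pint p (pcompose f g)"
proof (induction f)
  case 0
  then show ?case by (simp add: pint_0)
next
  case (pCons a f)
  then show ?case
    by (auto simp: pcompose_pCons intro!: pint_add pint_mult pint_const
        dest: pint_pCons_tail pint_pCons_head)
qed

lemma pint_poly: "pint p f \<Longrightarrow> in_Zp p x \<Longrightarrow> in_Zp p (poly f x)"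
proof (induction f)
  case 0
  then show ?case by (simp add: Zp_0[OF pp])
next
  case (pCons a f)
  then show ?case
    by (auto intro!: Zp_add[OF pp] Zp_mult[OF pp] dest: pint_pCons_tail pint_pCons_head)
qed

lemma taylor3:
  assumes "pint p f" "in_Zp p x"
  shows "\<exists>z. in_Zp p z \<and> poly f x = coeff f 0 + coeff f 1 * x + coeff f 2 * x^2 + x^3 * z"
proof -
  obtain a f1 where f1: "f = pCons a f1" by (cases f) auto
  obtain b f2 where f2: "f1 = pCons b f2" by (cases f1) auto
  obtain c h where h: "f2 = pCons c h" by (cases f2) auto
  have "pint p h" using assms(1) f1 f2 h pint_pCons_tail by blast
  then have "in_Zp p (poly h x)" using pint_poly assms(2) by blast
  moreover have "poly f x = coeff f 0 + coeff f 1 * x + coeff f 2 * x^2 + x^3 * poly h x"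
    using f1 f2 h by (simp add: numeral_2_eq_2 numeral_3_eq_3 algebra_simps power2_eq_square)
  ultimately show ?thesis by blast
qed

lemma taylor3_p:
  assumes "pint p f"
  shows "pdvd p 3 (poly f (of_nat p) - coeff f 0 - coeff f 1 * of_nat p - coeff f 2 * of_nat p^2)"
proof -
  obtain z where "in_Zp p z" "poly f (of_nat p) = coeff f 0 + coeff f 1 * of_nat p + coeff f 2 * of_nat p^2 + of_nat p^3 * z"
    using taylor3[OF assms Zp_of_nat[OF pp]] by blast
  then show ?thesis unfolding pdvd_def by auto
qed

end

lemma pcompose_power: "pcompose (f ^ k) q = (pcompose f q) ^ k"
  by (induction k) (auto simp: pcompose_mult pcompose_1)

lemma pcompose_X: "pcompose [:0, 1:] (q::rat poly) = q"
  by (simp add: pcompose_pCons)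

context
  fixes p :: nat assumes pp: "prime p"
begin

lemma Zp_inv_nat: "0 < k \<Longrightarrow> k < p \<Longrightarrow> in_Zp p (1 / of_nat k)"
  using Zp_div_int[OF pp Zp_1[OF pp], of "int k"]
  by (simp add: zdvd_imp_le) (metis dvd_imp_le nat_less_le not_less of_nat_dvd_iff)

lemma antidiff:
  assumes "pint p f" "degree f + 2 \<le> p"
  shows "\<exists>g. pint p g \<and> degree g \<le> degree f + 1 \<and> coeff g 0 = 0 \<and> pcompose g [:1,1:] = g + f"
  using assms
proof (induction "degree f" arbitrary: f rule: less_induct)
  case less
  show ?case
  proof (cases "f = 0")
    case True
    then show ?thesis by (intro exI[of _ 0]) (auto simp: pint_0[OF pp])
  next
    case False
    define d where "d = degree f"
    define c where "c = coeff f d"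
    define a where "a = c / of_nat (d+1)"
    define h where "h = smult a ([:0,1:] ^ (d+1))"
    define D where "D = smult a ([:1,1:] ^ (d+1) - [:0,1:] ^ (d+1))"
    have hD: "pcompose h [:1,1:] = h + D"
      unfolding h_def D_def pcompose_smult pcompose_power pcompose_X
      by (simp add: smult_diff_right del: power_Suc)
    have e1: "coeff ([:1,1:]^(d+1) :: rat poly) d = of_nat (d+1)"
      using coeff_linear_poly_power[of d "d+1" 1 1] by simp
    have e2: "coeff ([:0,1:]^(d+1) :: rat poly) d = 0"
      using coeff_linear_poly_power[of d "d+1" 0 1] by simp
    have cD: "coeff D d = c"
      unfolding D_def a_def coeff_smult coeff_diff e1 e2
      by (simp del: of_nat_Suc)
    have cD1: "coeff D (d+1) = 0"
      unfolding D_def a_def coeff_smult coeff_diff coeff_linear_power by simp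
    have degD: "degree D \<le> d"
    proof (rule degree_le, intro allI impI)
      fix i assume "d < i"
      show "coeff D i = 0"
      proof (cases "i = d+1")
        case True then show ?thesis using cD1 by simp
      next
        case False
        then have "i > degree ([:1,1:] ^ (d+1) :: rat poly)" "i > degree ([:0,1:] ^ (d+1) :: rat poly)"
          using \<open>d < i\<close> unfolding degree_linear_power by auto
        then have "coeff ([:1,1:] ^ (d+1) :: rat poly) i = 0" "coeff ([:0,1:] ^ (d+1) :: rat poly) i = 0"
          using coeff_eq_0 by blast+
        then show ?thesis unfolding D_def coeff_smult coeff_diff by simp
      qed
    qed
    have Za: "in_Zp p a"
    proof -
      have "in_Zp p c" using less.prems(1) unfolding pint_def c_def by blast
      moreover have "in_Zp p (1 / of_nat (d+1))"
        using Zp_inv_nat[of "d+1"] less.prems(2) unfolding d_def by simp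
      ultimately show ?thesis unfolding a_def using Zp_mult[OF pp] by (metis times_divide_eq_right mult_1_right)
    qed
    have pintX: "pint p [:a0, 1:]" if "in_Zp p a0" for a0
      using that by (intro pint_pCons[OF pp] pint_const[OF pp]) (auto simp: Zp_1[OF pp] pint_0[OF pp])
    have pD: "pint p D" unfolding D_def
      by (intro pint_smult[OF pp Za] pint_diff[OF pp] pint_power[OF pp] pintX) (auto simp: Zp_0[OF pp] Zp_1[OF pp])
    have ph: "pint p h" unfolding h_def
      by (intro pint_smult[OF pp Za] pint_power[OF pp] pintX) (auto simp: Zp_0[OF pp])
    define f' where "f' = f - D"
    have pf': "pint p f'" unfolding f'_def using pint_diff[OF pp less.prems(1) pD] .
    have degf': "degree f' \<le> d" unfolding f'_def d_def using degD d_def by (intro degree_diff_le) auto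
    have cf': "coeff f' d = 0" unfolding f'_def using cD c_def by simp
    obtain g' where g': "pint p g'" "degree g' \<le> degree f' + 1" "coeff g' 0 = 0" "pcompose g' [:1,1:] = g' + f'"
    proof (cases "f' = 0")
      case True
      then show ?thesis using that[of 0] by (auto simp: pint_0[OF pp])
    next
      case False
      then have "degree f' \<noteq> d" using cf' by (metis leading_coeff_0_iff)
      then have "degree f' < degree f" using degf' d_def by simp
      then show ?thesis using less.hyps[of f'] pf' less.prems(2) that by fastforce
    qed
    show ?thesis
    proof (intro exI[of _ "g' + h"] conjI)
      show "pint p (g' + h)" using pint_add[OF pp g'(1) ph] .
      have "degree h \<le> d + 1" unfolding h_def
        by (metis degree_linear_power degree_smult_le)
      then show "degree (g' + h) \<le> degree f + 1"
        using g'(2) degf' d_def by (intro degree_add_le) auto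
      show "coeff (g' + h) 0 = 0" using g'(3) unfolding h_def
        using coeff_linear_poly_power[of 0 "d+1" 0 1] by simp
      show "pcompose (g' + h) [:1, 1:] = g' + h + f"
        using g'(4) hD unfolding f'_def by (simp add: pcompose_add algebra_simps)
    qed
  qed
qed

end

lemma poly_Ph: "poly (\<Prod>j<m. [:of_nat j, 1:]) x = pochhammer (x::rat) m"
  by (simp add: poly_prod pochhammer_prod atLeast0LessThan add.commute)

lemma poly_const_iff:
  fixes G :: "rat poly"
  assumes "\<And>x. poly G (x + 1) = poly G x"
  shows "poly G x = poly G 0"
proof -
  have nat: "poly G (of_nat k) = poly G 0" for k
    by (induction k) (auto simp: assms[of "of_nat _", symmetric] add.commute)
  define H where "H = G - [:poly G 0:]"
  have "H = 0"
  proof (rule ccontr)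
    assume "H \<noteq> 0"
    then have "finite {x. poly H x = 0}" by (rule poly_roots_finite)
    moreover have "range (of_nat :: nat \<Rightarrow> rat) \<subseteq> {x. poly H x = 0}"
      using nat unfolding H_def by auto
    moreover have "infinite (range (of_nat :: nat \<Rightarrow> rat))"
      by (simp add: infinite_UNIV_char_0 range_inj_infinite inj_of_nat)
    ultimately show False using finite_subset by blast
  qed
  then have "poly H x = 0" by simp
  then show ?thesis unfolding H_def by simp
qed

lemma pderiv2_power_root:
  fixes P :: "rat poly"
  assumes "poly P r = 0" "n \<ge> 3"
  shows "poly (pderiv (pderiv (P ^ n))) r = 0"
proof -
  obtain m where m: "n = m + 3" using le_Suc_ex[OF assms(2)] by (auto simp: add.commute)
  have "pderiv (pderiv (P ^ n)) = pderiv (smult (of_nat n) (P ^ (n - 1) * pderiv P))"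
    by (simp add: pderiv_power)
  also have "\<dots> = smult (of_nat n) (P ^ (n - 1) * pderiv (pderiv P) + pderiv P * pderiv (P ^ (n-1)))"
    by (simp add: pderiv_smult pderiv_mult)
  also have "\<dots> = smult (of_nat n) (P ^ (n - 1) * pderiv (pderiv P) + pderiv P * smult (of_nat (n-1)) (P ^ (n - 2) * pderiv P))"
    by (simp add: pderiv_power numeral_2_eq_2)
  finally show ?thesis using assms(1) m by simp
qed

lemma sym_a2:
  fixes n q :: nat and F0 :: "rat poly"
  defines "Qh \<equiv> (\<Prod>j<q-1. [:of_nat j, 1:]) ^ n"
  assumes n3: "n \<ge> 3" and q2: "q \<ge> 2" and par: "even n \<or> odd q"
    and F0: "pcompose F0 [:1,1:] = F0 + Qh" "coeff F0 0 = 0"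
  shows "coeff F0 2 = 0"
proof -
  define Ph where "Ph = (\<Prod>j<q-1. [:of_nat j, 1 :: rat:])"
  have Qh: "Qh = Ph ^ n" unfolding Qh_def Ph_def ..
  have pQh: "poly Qh x = (pochhammer x (q-1)) ^ n" for x
    unfolding Qh poly_power Ph_def poly_Ph ..
  have step: "poly F0 (x + 1) = poly F0 x + poly Qh x" for x
    using arg_cong[OF F0(1), of "\<lambda>f. poly f x"] by (simp add: poly_pcompose add.commute)
  have Ph_root: "poly Ph (- of_nat j) = 0" if "j < q - 1" for j
    unfolding Ph_def poly_Ph using that by (auto simp: pochhammer_eq_0_iff)
  have Qh_root: "poly Qh (- of_nat j) = 0" if "j < q - 1" for j
    using Ph_root[OF that] n3 unfolding Qh by simp
  have Qh_sym: "poly Qh (2 - of_nat q - x) = poly Qh x" for x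
  proof -
    have "pochhammer (2 - of_nat q - x) (q-1) = pochhammer (- (x + of_nat q - 2)) (q - 1)"
      by (simp add: algebra_simps)
    also have "\<dots> = (-1) ^ (q-1) * pochhammer (x + of_nat q - 2 - of_nat (q-1) + 1) (q-1)"
      by (rule pochhammer_minus)
    also have "x + of_nat q - 2 - of_nat (q-1) + 1 = x" using q2 by (simp add: of_nat_diff)
    finally have "pochhammer (2 - of_nat q - x) (q-1) = (-1) ^ (q-1) * pochhammer x (q-1)" .
    then have "poly Qh (2 - of_nat q - x) = ((-1) ^ (q-1)) ^ n * poly Qh x"
      unfolding pQh by (simp add: power_mult_distrib)
    moreover have "((-1::rat) ^ (q-1)) ^ n = 1"
    proof (cases "even n")
      case True then show ?thesis by (simp add: power_mult[symmetric] mult.commute)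
    next
      case False then have "odd q" using par by blast
      then have "even (q-1)" using q2 by simp
      then show ?thesis by simp
    qed
    ultimately show ?thesis by simp
  qed
  have F00: "poly F0 0 = 0" using F0(2) by (simp add: poly_0_coeff_0)
  have F0neg: "poly F0 (- of_nat j) = 0" if "j \<le> q - 2" for j
    using that
  proof (induction j)
    case 0 then show ?case using F00 by simp
  next
    case (Suc j)
    have "poly F0 (- of_nat (Suc j) + 1) = poly F0 (- of_nat (Suc j)) + poly Qh (- of_nat (Suc j))"
      by (rule step)
    moreover have "poly Qh (- of_nat (Suc j)) = 0" using Qh_root[of "Suc j"] Suc.prems by simp
    moreover have "- of_nat (Suc j) + 1 = - (of_nat j :: rat)" by simp
    ultimately show ?case using Suc by simp
  qed
  have F01: "poly F0 1 = 0" using step[of 0] F00 Qh_root[of 0] q2 by simp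
  have F0c: "poly F0 (3 - of_nat q) = 0"
  proof (cases "q = 2")
    case True then show ?thesis using F01 by simp
  next
    case False
    then have q3: "3 \<le> q" using q2 by linarith
    have "(of_nat (q - 3) :: rat) = of_nat q - of_nat 3" using q3 by (rule of_nat_diff)
    then have e: "(3 - of_nat q :: rat) = - of_nat (q - 3)" by simp
    have "poly F0 (- of_nat (q-3)) = 0" by (rule F0neg) simp
    then show ?thesis unfolding e .
  qed
  define G where "G = pcompose F0 [:3 - of_nat q, -1:] + F0"
  have pG: "poly G x = poly F0 (3 - of_nat q - x) + poly F0 x" for x
    unfolding G_def by (simp add: poly_pcompose)
  have "poly G (x + 1) = poly G x" for x
  proof -
    have "poly F0 (3 - of_nat q - x) = poly F0 ((2 - of_nat q - x) + 1)"
      by (rule arg_cong[where f="poly F0"]) simp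
    also have "\<dots> = poly F0 (2 - of_nat q - x) + poly Qh (2 - of_nat q - x)" by (rule step)
    also have "\<dots> = poly F0 (2 - of_nat q - x) + poly Qh x" using Qh_sym[of x] by simp
    finally have a: "poly F0 (3 - of_nat q - x) = poly F0 (2 - of_nat q - x) + poly Qh x" .
    have e: "3 - of_nat q - (x + 1) = (2 - of_nat q - x :: rat)" by simp
    have "poly G (x + 1) = poly F0 (2 - of_nat q - x) + poly F0 (x + 1)" unfolding pG e ..
    also have "\<dots> = poly G x" unfolding pG a step by simp
    finally show ?thesis .
  qed
  then have Gc: "poly G x = poly G 0" for x by (rule poly_const_iff)
  have "poly G 0 = 0" using pG[of 0] F0c F00 by simp
  then have "poly G x = 0" for x using Gc[of x] by simp
  then have G0: "G = 0" using poly_all_0_iff_0 by blast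
  define D2 where "D2 = pderiv (pderiv F0)"
  have "pderiv (pderiv G) = 0" using G0 by simp
  moreover have "pderiv (pderiv G) = pcompose D2 [:3 - of_nat q, -1:] + D2"
    unfolding G_def D2_def
    by (simp add: pderiv_add pderiv_pcompose pderiv_mult pderiv_pCons pderiv_minus pderiv_diff pcompose_uminus)
  ultimately have D2sym0: "pcompose D2 [:3 - of_nat q, -1:] + D2 = 0" by simp
  have D2sym: "poly D2 (3 - of_nat q - x) = - poly D2 x" for x
  proof -
    have "poly (pcompose D2 [:3 - of_nat q, -1:] + D2) x = 0" using D2sym0 by simp
    then show ?thesis by (simp add: poly_pcompose algebra_simps eq_neg_iff_add_eq_0)
  qed
  have "pderiv (pderiv (pcompose F0 [:1,1:])) = pcompose D2 [:1,1:]"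
    unfolding D2_def by (simp add: pderiv_pcompose pderiv_mult pderiv_pCons)
  moreover have "pderiv (pderiv (F0 + Qh)) = D2 + pderiv (pderiv Qh)"
    unfolding D2_def by (simp add: pderiv_add)
  ultimately have D2eq: "pcompose D2 [:1,1:] = D2 + pderiv (pderiv Qh)" using F0(1) by simp
  have D2step: "poly D2 (x + 1) = poly D2 x + poly (pderiv (pderiv Qh)) x" for x
  proof -
    have "poly (pcompose D2 [:1,1:]) x = poly (D2 + pderiv (pderiv Qh)) x" using D2eq by simp
    then show ?thesis by (simp add: poly_pcompose add.commute)
  qed
  have D2const: "poly D2 (1 - of_nat j) = poly D2 1" if "j \<le> q - 1" for j
    using that
  proof (induction j)
    case 0 then show ?case by simp
  next
    case (Suc j)
    have "poly D2 (- of_nat j + 1) = poly D2 (- of_nat j) + poly (pderiv (pderiv Qh)) (- of_nat j)"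
      by (rule D2step)
    moreover have "poly (pderiv (pderiv Qh)) (- of_nat j) = 0"
      unfolding Qh using pderiv2_power_root[OF Ph_root n3] Suc.prems by simp
    ultimately show ?case using Suc by (simp add: algebra_simps)
  qed
  have "poly D2 0 = poly D2 1" using D2const[of 1] q2 by simp
  moreover have "poly D2 (3 - of_nat q) = poly D2 1"
    using D2const[of "q-2"] q2 by (simp add: of_nat_diff)
  moreover have "poly D2 (3 - of_nat q) = - poly D2 0" using D2sym[of 0] by simp
  ultimately have "poly D2 0 = 0" by simp
  then show ?thesis unfolding D2_def by (simp add: poly_0_coeff_0 coeff_pderiv numeral_2_eq_2)
qed

lemma pCons_split: obtains a K where "W = pCons a K" by (cases W) auto

lemma key_polys:
  fixes n q p :: nat
  defines "Qh \<equiv> (\<Prod>j<q-1. [:of_nat j, 1:]) ^ n"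
  assumes pp: "prime p" and n3: "n \<ge> 3" and q2: "q \<ge> 2" and par: "even n \<or> odd q"
    and pbig: "n * (q - 1) + 2 \<le> p" and np: "n < p"
  shows "\<exists>F0 F1 F2 K L. pint p F0 \<and> pint p F1 \<and> pint p F2 \<and> pint p K \<and> pint p L \<and>
     (\<forall>x. poly F0 (x+1) = poly F0 x + poly Qh x) \<and>
     (\<forall>x. poly F0 (x+1) = x * poly K x) \<and>
     (\<forall>x. poly F1 (x+1) = poly F1 x + of_nat n * poly K x) \<and>
     (\<forall>x. poly F2 (x+1) = poly F2 x + poly L x) \<and>
     (\<forall>x. x * poly L x = of_nat n * poly F1 x + of_nat (n choose 2) * poly K x) \<and>
     pdvd p 3 ((poly F0 (of_nat p) + (of_nat p / of_nat n) * poly F1 (of_nat p)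
                 + (of_nat p / of_nat n)^2 * poly F2 (of_nat p))
               - (poly F0 1 + (of_nat p / of_nat n) * poly F1 1 + (of_nat p / of_nat n)^2 * poly F2 1))"
proof -
  define Ph where "Ph = (\<Prod>j<q-1. [:of_nat j, 1 :: rat:])"
  have Qh: "Qh = Ph ^ n" unfolding Qh_def Ph_def ..
  have pX: "pint p [:a0, 1:]" if "in_Zp p a0" for a0
    using that by (intro pint_pCons[OF pp] pint_const[OF pp]) (auto simp: Zp_1[OF pp] pint_0[OF pp])
  have pPh: "pint p Ph" unfolding Ph_def
    by (intro pint_prod[OF pp] pX Zp_of_nat[OF pp])
  have pQh: "pint p Qh" unfolding Qh by (rule pint_power[OF pp pPh])
  have dPh: "degree Ph \<le> q - 1" unfolding Ph_def
    using degree_prod_sum_le[of "{..<q-1}" "\<lambda>j. [:of_nat j, 1 :: rat:]"] by simp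
  have dQh: "degree Qh \<le> n * (q - 1)" unfolding Qh
    using degree_power_le[of Ph n] dPh by (metis le_trans mult.commute mult_le_mono2)
  obtain R where PhR: "Ph = [:0,1:] * R"
  proof -
    have "Ph = [:of_nat 0, 1:] * (\<Prod>j<q-2. [:of_nat (Suc j), 1:])"
      unfolding Ph_def using q2 prod.lessThan_Suc_shift[of "\<lambda>j. [:of_nat j, 1 :: rat:]" "q-2"]
      by (simp add: Suc_diff_Suc numeral_2_eq_2)
    then show ?thesis using that by simp
  qed
  have Qh_mon: "Qh = monom 1 n * R ^ n" unfolding Qh PhR power_mult_distrib monom_altdef by simp
  have cQh: "coeff Qh i = 0" if "i < n" for i
    unfolding Qh_mon coeff_monom_mult using that by simp
  obtain F0 where F0: "pint p F0" "degree F0 \<le> degree Qh + 1" "coeff F0 0 = 0"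
      "pcompose F0 [:1,1:] = F0 + Qh"
    using antidiff[OF pp pQh] dQh pbig by fastforce
  have a2: "coeff F0 2 = 0"
    using sym_a2[OF n3 q2 par] F0(3,4) unfolding Qh_def by blast
  have stepF0: "poly F0 (x+1) = poly F0 x + poly Qh x" for x
    using arg_cong[OF F0(4), of "\<lambda>f. poly f x"] by (simp add: poly_pcompose add.commute)
  define W where "W = F0 + Qh"
  obtain a K where WK: "W = pCons a K" by (rule pCons_split)
  have "a = coeff W 0" using WK by simp
  then have a0: "a = 0" unfolding W_def using F0(3) cQh[of 0] n3 by simp
  have pK: "pint p K" using F0(1) pQh WK unfolding W_def by (metis pint_add[OF pp] pint_pCons_tail[OF pp])
  have polyK: "poly F0 (x+1) = x * poly K x" for x
    using stepF0[of x] WK a0 unfolding W_def by (metis poly_add poly_pCons add_0)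
  have K0: "coeff K 0 = coeff F0 1" using WK cQh[of 1] n3 unfolding W_def
    by (metis coeff_add coeff_pCons_Suc One_nat_def add_0_right less_trans numeral_3_eq_3 lessI zero_less_Suc le_trans not_le numeral_2_eq_2 Suc_le_lessD)
  have K1: "coeff K 1 = 0"
  proof -
    have "coeff K 1 = coeff W 2" using WK by (simp add: numeral_2_eq_2)
    also have "\<dots> = 0" unfolding W_def using a2 cQh[of 2] n3 by simp
    finally show ?thesis .
  qed
  have dK: "degree K \<le> n * (q - 1)"
  proof (cases "K = 0")
    case True then show ?thesis by simp
  next
    case False
    then have "degree W = Suc (degree K)" using WK by simp
    moreover have "degree W \<le> n * (q - 1) + 1" unfolding W_def
      using F0(2) dQh by (intro degree_add_le) auto
    ultimately show ?thesis by simp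
  qed
  have Zn: "in_Zp p (1 / of_nat n)" using Zp_inv_nat[OF pp, of n] n3 np by simp
  have Z2: "in_Zp p (1 / 2)" using Zp_inv_nat[OF pp, of 2] n3 np by simp
  obtain F1' where F1': "pint p F1'" "degree F1' \<le> degree (smult (of_nat n) K) + 1" "coeff F1' 0 = 0"
      "pcompose F1' [:1,1:] = F1' + smult (of_nat n) K"
  proof -
    have "degree (smult (of_nat n :: rat) K) + 2 \<le> p" using dK pbig degree_smult_le[of "of_nat n" K] by linarith
    then show ?thesis using antidiff[OF pp pint_smult[OF pp Zp_of_nat[OF pp] pK]] that by blast
  qed
  define b0 where "b0 = - (of_nat n - 1) / 2 * coeff K 0"
  have Zb0: "in_Zp p b0"
  proof -
    have "b0 = - ((of_nat n - 1) * (1/2) * coeff K 0)" unfolding b0_def by (simp add: field_simps)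
    moreover have "in_Zp p ((of_nat n - 1) * (1/2) * coeff K 0)"
      using pK unfolding pint_def
      by (intro Zp_mult[OF pp] Zp_diff[OF pp] Zp_of_nat[OF pp] Zp_1[OF pp] Z2) auto
    ultimately show ?thesis using Zp_uminus by metis
  qed
  define F1 where "F1 = F1' + [:b0:]"
  have pF1: "pint p F1" unfolding F1_def using F1'(1) pint_const[OF pp Zb0] by (rule pint_add[OF pp])
  have stepF1: "poly F1 (x+1) = poly F1 x + of_nat n * poly K x" for x
    using arg_cong[OF F1'(4), of "\<lambda>f. poly f x"] unfolding F1_def by (simp add: poly_pcompose add.commute)
  have F10: "coeff F1 0 = b0" unfolding F1_def using F1'(3) by simp
  have dF1: "degree F1 \<le> n * (q - 1) + 1"
  proof -
    have "degree F1' \<le> n * (q - 1) + 1" using F1'(2) dK degree_smult_le[of "of_nat n" K] by linarith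
    then show ?thesis unfolding F1_def by (intro degree_add_le) auto
  qed
  define Wl where "Wl = smult (of_nat n) F1 + smult (of_nat (n choose 2)) K"
  obtain a' L where WlL: "Wl = pCons a' L" by (rule pCons_split)
  have "a' = coeff Wl 0" using WlL by simp
  also have "\<dots> = of_nat n * b0 + of_nat (n choose 2) * coeff K 0" unfolding Wl_def using F10 by simp
  also have "\<dots> = 0"
  proof -
    have ev: "even (n * (n - 1::nat))" by (cases "even n") auto
    then have "2 * (n choose 2) = n * (n - 1::nat)" by (simp add: choose_two)
    then have "2 * (of_nat (n choose 2) :: rat) = of_nat n * (of_nat n - 1)"
      using n3 by (metis of_nat_mult of_nat_numeral of_nat_diff of_nat_1 le_trans one_le_numeral)
    then have c2: "of_nat (n choose 2) = (of_nat n * (of_nat n - 1) / 2 :: rat)" by simp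
    show ?thesis unfolding b0_def c2 by (simp add: field_simps)
  qed
  finally have a'0: "a' = 0" .
  have pWl: "pint p Wl" unfolding Wl_def
    by (intro pint_add[OF pp] pint_smult[OF pp] Zp_of_nat[OF pp] pF1 pK)
  have pL: "pint p L" using pWl WlL by (metis pint_pCons_tail[OF pp])
  have polyL: "x * poly L x = of_nat n * poly F1 x + of_nat (n choose 2) * poly K x" for x
    using arg_cong[OF WlL, of "\<lambda>f. poly f x"] a'0 unfolding Wl_def by simp
  have L0: "coeff L 0 = of_nat n * coeff F1 1"
  proof -
    have "coeff L 0 = coeff Wl 1" using WlL by simp
    then show ?thesis unfolding Wl_def using K1 by simp
  qed
  have dL: "degree L \<le> n * (q - 1)"
  proof (cases "L = 0")
    case True then show ?thesis by simp
  next
    case False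
    then have "degree Wl = Suc (degree L)" using WlL by simp
    moreover have "degree Wl \<le> n * (q - 1) + 1" unfolding Wl_def
      using dF1 dK degree_smult_le by (intro degree_add_le) (auto intro: le_trans)
    ultimately show ?thesis by simp
  qed
  obtain F2 where F2: "pint p F2" "coeff F2 0 = 0 \<or> True" "pcompose F2 [:1,1:] = F2 + L"
    using antidiff[OF pp pL] dL pbig by fastforce
  have stepF2: "poly F2 (x+1) = poly F2 x + poly L x" for x
    using arg_cong[OF F2(3), of "\<lambda>f. poly f x"] by (simp add: poly_pcompose add.commute)
  define P where "P = (of_nat p :: rat)"
  define y where "y = P / of_nat n"
  have Pnz: "of_nat n \<noteq> (0::rat)" using n3 by simp
  obtain z0 where z0: "in_Zp p z0" "poly F0 P = coeff F0 0 + coeff F0 1 * P + coeff F0 2 * P^2 + P^3 * z0"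
    using taylor3[OF pp F0(1) Zp_of_nat[OF pp]] unfolding P_def by blast
  obtain z1 where z1: "in_Zp p z1" "poly F1 P = coeff F1 0 + coeff F1 1 * P + coeff F1 2 * P^2 + P^3 * z1"
    using taylor3[OF pp pF1 Zp_of_nat[OF pp]] unfolding P_def by blast
  obtain z2 where z2: "in_Zp p z2" "poly F2 P = coeff F2 0 + coeff F2 1 * P + coeff F2 2 * P^2 + P^3 * z2"
    using taylor3[OF pp F2(1) Zp_of_nat[OF pp]] unfolding P_def by blast
  have F01: "poly F0 1 = 0" using stepF0[of 0] F0(3) cQh[of 0] n3 by (simp add: poly_0_coeff_0)
  have F11: "poly F1 1 = b0 + of_nat n * coeff F0 1"
    using stepF1[of 0] F10 K0 by (simp add: poly_0_coeff_0)
  have F21: "poly F2 1 = coeff F2 0 + of_nat n * coeff F1 1"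
    using stepF2[of 0] L0 by (simp add: poly_0_coeff_0)
  define Z where "Z = z0 + coeff F1 2 * (1 / of_nat n) + z1 * P * (1 / of_nat n)
      + coeff F2 1 * (1 / of_nat n)^2 + coeff F2 2 * P * (1 / of_nat n)^2 + z2 * P^2 * (1 / of_nat n)^2"
  have ZZ: "in_Zp p Z" unfolding Z_def P_def
    using z0(1) z1(1) z2(1) pF1 F2(1) Zn unfolding pint_def
    by (intro Zp_add[OF pp] Zp_mult[OF pp] Zp_power[OF pp] Zp_of_nat[OF pp]) auto
  have "(poly F0 P + y * poly F1 P + y^2 * poly F2 P) - (poly F0 1 + y * poly F1 1 + y^2 * poly F2 1)
        = P^3 * Z"
    unfolding z0(2) z1(2) z2(2) F01 F11 F21 F0(3) F10 a2 y_def Z_def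
    using Pnz by (simp add: field_simps power2_eq_square power3_eq_cube)
  then have "pdvd p 3 ((poly F0 P + y * poly F1 P + y^2 * poly F2 P) - (poly F0 1 + y * poly F1 1 + y^2 * poly F2 1))"
    unfolding pdvd_def P_def using ZZ by auto
  then show ?thesis
    using F0(1) pF1 F2(1) pK pL stepF0 polyK stepF1 stepF2 polyL unfolding y_def P_def by blast
qed

lemma step_alg:
  fixes s y f0' f1 f1' f2 f2' k l U c2 N :: rat
  assumes "f0' = s*k" "f1' = f1 + N*k" "f2' = f2 + l" "s*l = N*f1 + c2*k"
  shows "(f0' + y*f1' + y^2*f2') * s^(m+3) - (f0' + y*f1 + y^2*f2) * (s^(m+3) + N * s^(m+2) * y + c2 * s^(m+1) * y^2 + y^3 * U)
    = -(y^3 * (c2 * s^(m+1) * f1 + N * s^(m+2) * f2 + y * c2 * s^(m+1) * f2 + (f0' + y*f1 + y^2*f2) * U))"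
proof -
  define S where "S = s^(m+1)"
  have e3: "s^(m+3) = s*s*S" and e2: "s^(m+2) = s*S" unfolding S_def by (simp_all add: power_add power2_eq_square power3_eq_cube eval_nat_numeral)
  have l: "s*s*S*l = s*S*(N*f1 + c2*k)" using assms(4) by (metis mult.commute mult.left_commute)
  have l2: "S * (l * (s * (s * (y * y)))) = N * (S * (f1 * (s * (y * y)))) + S * (c2 * (k * (s * (y * y))))"
    using arg_cong[OF l, of "\<lambda>z. z * y * y"] by (simp add: algebra_simps)
  show ?thesis unfolding e3 e2 S_def[symmetric] assms(1,2,3)
    using l2 by (simp add: algebra_simps power2_eq_square power3_eq_cube)
qed

lemma binom3:
  fixes s y :: rat assumes "n \<ge> 3"
  shows "(s + y)^n = s^n + of_nat n * s^(n-1) * y + of_nat (n choose 2) * s^(n-2) * y^2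
     + y^3 * (\<Sum>k\<in>{3..n}. of_nat (n choose k) * y^(k-3) * s^(n-k))"
proof -
  have "(s + y)^n = (y + s)^n" by (simp add: add.commute)
  also have "\<dots> = (\<Sum>k\<le>n. of_nat (n choose k) * y^k * s^(n-k))" by (rule binomial_ring)
  also have "{..n} = {..<3} \<union> {3..n}" using assms by auto
  also have "(\<Sum>k\<in>{..<3} \<union> {3..n}. of_nat (n choose k) * y^k * s^(n-k)) =
     (\<Sum>k<3. of_nat (n choose k) * y^k * s^(n-k)) + (\<Sum>k\<in>{3..n}. of_nat (n choose k) * y^k * s^(n-k))"
    by (rule sum.union_disjoint) auto
  also have "(\<Sum>k<3. of_nat (n choose k) * y^k * s^(n-k)) = s^n + of_nat n * s^(n-1) * y + of_nat (n choose 2) * s^(n-2) * y^2"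
    by (simp add: numeral_3_eq_3 numeral_2_eq_2 algebra_simps)
  also have "(\<Sum>k\<in>{3..n}. of_nat (n choose k) * y^k * s^(n-k)) = y^3 * (\<Sum>k\<in>{3..n}. of_nat (n choose k) * y^(k-3) * s^(n-k))"
    unfolding sum_distrib_left
  proof (rule sum.cong)
    fix k assume "k \<in> {3..n}"
    then have "y^k = y^3 * y^(k-3)" by (simp add: power_add[symmetric])
    then show "of_nat (n choose k) * y^k * s^(n-k) = y^3 * (of_nat (n choose k) * y^(k-3) * s^(n-k))" by simp
  qed simp
  finally show ?thesis .
qed

context
  fixes p :: nat assumes pp: "prime p"
begin

lemma punit_1_plus: assumes "in_Zp p z" shows "punit p (1 + of_nat p * z)"
proof -
  obtain a b where ab: "\<not> int p dvd b" "z = of_int a / of_int b" using assms unfolding in_Zp_def by blast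
  have b0: "b \<noteq> 0" using ab by auto
  have e: "1 + of_nat p * z = of_int (b + int p * a) / of_int b" using ab b0 by (simp add: field_simps)
  have nd: "\<not> int p dvd (b + int p * a)" using ab(1) by (metis dvd_add_left_iff dvd_triv_left)
  have "in_Zp p (1 + of_nat p * z)" unfolding e in_Zp_def using ab(1) by blast
  moreover have "in_Zp p (inverse (1 + of_nat p * z))" unfolding e in_Zp_def using nd
    by (intro exI[of _ b] exI[of _ "b + int p * a"]) (simp add: inverse_eq_divide)
  moreover have "1 + of_nat p * z \<noteq> 0" unfolding e using nd b0 by (metis divide_eq_0_iff dvd_0_right of_int_eq_0_iff)
  ultimately show ?thesis unfolding punit_def by blast
qed

lemma punit_add_pdvd: assumes "punit p u" "pdvd p 1 w" shows "punit p (u + w)"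
proof -
  obtain z where z: "in_Zp p z" "w = of_nat p * z" using assms(2) unfolding pdvd_def by auto
  have u0: "u \<noteq> 0" using assms(1) unfolding punit_def by auto
  have "u + w = u * (1 + of_nat p * (z * inverse u))" using z u0 by (simp add: field_simps)
  moreover have "punit p (1 + of_nat p * (z * inverse u))"
    using punit_1_plus Zp_mult[OF pp z(1)] assms(1) unfolding punit_def by blast
  ultimately show ?thesis using punit_mult[OF pp assms(1)] by simp
qed

lemma prod_cong_mod:
  assumes "\<And>i. i \<in> A \<Longrightarrow> in_Zp p (f i)" "\<And>i. i \<in> A \<Longrightarrow> in_Zp p (g i)"
    "\<And>i. i \<in> A \<Longrightarrow> pdvd p k (f i - g i)"
  shows "pdvd p k (prod f A - prod g A)"
  using assms
proof (induction A rule: infinite_finite_induct)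
  case (infinite A) then show ?case by (simp add: pdvd_zero[OF pp])
next
  case empty then show ?case by (simp add: pdvd_zero[OF pp])
next
  case (insert a A)
  have "prod f (insert a A) - prod g (insert a A) = f a * (prod f A - prod g A) + (f a - g a) * prod g A"
    using insert.hyps by (simp add: algebra_simps)
  moreover have "pdvd p k (f a * (prod f A - prod g A))"
    using insert by (intro pdvd_multZ'[OF pp]) auto
  moreover have "pdvd p k ((f a - g a) * prod g A)"
    using insert by (intro pdvd_multZ[OF pp] Zp_prod[OF pp]) auto
  ultimately show ?case by (simp add: pdvd_add[OF pp])
qed

lemma pow_cong1: assumes "in_Zp p a" "pdvd p k (a - 1)" shows "pdvd p k (a ^ m - 1)"
proof (induction m)
  case 0 then show ?case by (simp add: pdvd_zero[OF pp])
next
  case (Suc m)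
  have eq: "a ^ Suc m - 1 = a * (a^m - 1) + (a - 1)" by (simp add: algebra_simps)
  have "pdvd p k (a * (a^m - 1) + (a - 1))" using Suc assms by (intro pdvd_add[OF pp] pdvd_multZ'[OF pp]) auto
  then show ?case by (simp only: eq)
qed

lemma yunit:
  assumes "0 < n" "n < p" "\<not> int p dvd c"
  shows "punit p (of_nat p / of_nat n + of_int c)"
proof -
  have n0: "(of_nat n :: rat) \<noteq> 0" using assms by simp
  have e: "of_nat p / of_nat n + of_int c = of_int (int p + int n * c) / (of_int (int n) :: rat)"
    using n0 by (simp add: field_simps)
  have pn: "\<not> int p dvd int n" using assms(1,2) by (simp add: nat_dvd_not_less)
  have nd: "\<not> int p dvd (int p + int n * c)"
    using assms(3) pn pp by (simp add: prime_dvd_mult_iff)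
  have "in_Zp p (of_nat p / of_nat n + of_int c)" unfolding e in_Zp_def using pn by blast
  moreover have "in_Zp p (inverse (of_nat p / of_nat n + of_int c))" unfolding e in_Zp_def using nd
    by (intro exI[of _ "int n"] exI[of _ "int p + int n * c"]) (simp add: inverse_eq_divide)
  moreover have "int p + int n * c \<noteq> 0" using nd by (metis dvd_0_right)
  then have "of_nat p / of_nat n + of_int c \<noteq> (0::rat)" unfolding e using n0
    by (metis divide_eq_0_iff of_int_eq_0_iff of_int_of_nat_eq)
  ultimately show ?thesis unfolding punit_def by blast
qed

lemma pdvd_y: assumes "0 < n" "n < p" shows "pdvd p 1 (of_nat p / of_nat n)"
proof -
  have "of_nat p / of_nat n = of_nat p ^ 1 * (1 / (of_nat n :: rat))" by simp
  then show ?thesis unfolding pdvd_def using Zp_inv_nat[OF pp assms] by blast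
qed

end

definition ee :: "nat \<Rightarrow> rat \<Rightarrow> nat \<Rightarrow> rat" where
  "ee n y t = (fact (t - 1) / pochhammer (y + 1) (t - 1)) ^ n"

lemma ee_1: "ee n y 1 = 1" unfolding ee_def by simp

lemma ee_Suc: assumes "t \<ge> 1" shows "ee n y (Suc t) = ee n y t * (of_nat t / (of_nat t + y)) ^ n"
proof -
  obtain u where u: "t = Suc u" using assms by (cases t) auto
  have f: "fact t = fact u * (of_nat t :: rat)" unfolding u by (simp add: algebra_simps)
  have g: "pochhammer (y + 1) t = pochhammer (y + 1) u * (of_nat t + y)"
    unfolding u by (simp add: pochhammer_Suc algebra_simps)
  have "ee n y (Suc t) = (fact t / pochhammer (y + 1) t) ^ n" unfolding ee_def by simp
  also have "\<dots> = ((fact u / pochhammer (y + 1) u) * (of_nat t / (of_nat t + y))) ^ n"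
    unfolding f g by (simp only: times_divide_times_eq)
  also have "\<dots> = ee n y t * (of_nat t / (of_nat t + y)) ^ n"
    unfolding ee_def power_mult_distrib u by simp
  finally show ?thesis .
qed

lemma ee_p:
  fixes p n :: nat
  assumes pp: "prime p" and n0: "0 < n" and np: "n < p" and p2: "2 < p"
  shows "pdvd p 2 (ee n (of_nat p / of_nat n) p - 1)"
proof -
  define y where "y = (of_nat p / of_nat n :: rat)"
  define P where "P = (of_nat p :: rat)"
  define X where "X = pochhammer (y + 1) (p - 1)"
  define Y where "Y = (fact (p - 1) :: rat)"
  have yd: "pdvd p 1 y" unfolding y_def using pdvd_y[OF pp n0 np] .
  have Pd: "pdvd p 1 P" unfolding P_def using pdvd_p[OF pp] .
  have X: "X = (\<Prod>j\<in>{0..<p-1}. y + (1 + of_nat j))" unfolding X_def pochhammer_prod by (simp add: add.assoc)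
  have Y: "Y = (\<Prod>j\<in>{0..<p-1}. 1 + of_nat j)" unfolding Y_def pochhammer_fact pochhammer_prod ..
  have uu: "punit p (1 + of_nat j)" if "j \<in> {0..<p-1}" for j
  proof -
    have "\<not> int p dvd int (1 + j)" using that by (auto dest: zdvd_imp_le)
    then show ?thesis using punit_int[OF pp, of "int (1 + j)"] by simp
  qed
  have yu: "punit p (y + (1 + of_nat j))" if "j \<in> {0..<p-1}" for j
  proof -
    have "\<not> int p dvd int (1 + j)" using that by (auto dest: zdvd_imp_le)
    then show ?thesis using yunit[OF pp n0 np, of "int (1 + j)"] unfolding y_def by simp
  qed
  have Xu: "punit p X" unfolding X using yu by (intro punit_prod[OF pp])
  have Yu: "punit p Y" unfolding Y using uu by (intro punit_prod[OF pp])
  have ZX: "in_Zp p X" and ZY: "in_Zp p Y" using Xu Yu unfolding punit_def by auto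
  have XY1: "pdvd p 1 (X - Y)" unfolding X Y
    using yu uu yd by (intro prod_cong_mod[OF pp]) (auto simp: punit_def)
  have rev: "1 + of_nat (p - 1 + 0 - Suc j) = P - (1 + of_nat j)" if "j \<in> {0..<p-1}" for j
  proof -
    have "j < p - 1" using that by simp
    then have "1 + (p - 1 + 0 - Suc j) + (1 + j) = p" using p2 by linarith
    from arg_cong[OF this, of "of_nat :: nat \<Rightarrow> rat"]
    have "1 + of_nat (p - 1 + 0 - Suc j) + (1 + of_nat j) = (of_nat p :: rat)" unfolding of_nat_add of_nat_1 .
    then show ?thesis unfolding P_def by (simp add: algebra_simps)
  qed
  have Xr: "X = (\<Prod>j\<in>{0..<p-1}. y + (P - (1 + of_nat j)))"
    unfolding X prod.atLeastLessThan_rev[of "\<lambda>j. y + (1 + of_nat j)" 0 "p-1"]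
  proof (rule prod.cong[OF refl])
    fix j assume j: "j \<in> {0..<p-1}"
    show "y + (1 + of_nat (p - 1 + 0 - Suc j)) = y + (P - (1 + of_nat j))" unfolding rev[OF j] ..
  qed
  have Yr: "Y = (\<Prod>j\<in>{0..<p-1}. P - (1 + of_nat j))"
    unfolding Y prod.atLeastLessThan_rev[of "\<lambda>j. 1 + of_nat j" 0 "p-1"]
  proof (rule prod.cong[OF refl])
    fix j assume j: "j \<in> {0..<p-1}"
    show "1 + of_nat (p - 1 + 0 - Suc j) = P - (1 + (of_nat j :: rat))" unfolding rev[OF j] ..
  qed
  have XX: "X * X = (\<Prod>j\<in>{0..<p-1}. (1 + of_nat j) * (P - (1 + of_nat j)) + (y * P + y^2))"
    unfolding X
    apply (subst (2) Xr[unfolded X])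
    unfolding prod.distrib[symmetric] by (intro prod.cong) (auto simp: algebra_simps power2_eq_square)
  have YY: "Y * Y = (\<Prod>j\<in>{0..<p-1}. (1 + of_nat j) * (P - (1 + of_nat j)))"
    unfolding Y
    apply (subst (2) Yr[unfolded Y])
    unfolding prod.distrib[symmetric] ..
  have ZP: "in_Zp p P" unfolding P_def using Zp_of_nat[OF pp] .
  have Zy: "in_Zp p y" using pdvd_Zp[OF pp yd] .
  have sq: "pdvd p 2 (X * X - Y * Y)" unfolding XX YY
  proof (intro prod_cong_mod[OF pp])
    fix j
    show A: "in_Zp p ((1 + of_nat j) * (P - (1 + of_nat j)))"
      by (intro Zp_mult[OF pp] Zp_diff[OF pp] Zp_add[OF pp] Zp_1[OF pp] Zp_of_nat[OF pp] ZP)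
    have B: "in_Zp p (y * P + y^2)"
      by (intro Zp_add[OF pp] Zp_mult[OF pp] Zp_power[OF pp] Zy ZP)
    show "in_Zp p ((1 + of_nat j) * (P - (1 + of_nat j)) + (y * P + y^2))"
      using Zp_add[OF pp A B] .
    have "pdvd p 2 (y * P + y^2)"
      using pdvd_mult[OF pp yd Pd] pdvd_pow[OF pp yd, of 2] by (intro pdvd_add[OF pp]) (auto simp: numeral_2_eq_2)
    then show "pdvd p 2 ((1 + of_nat j) * (P - (1 + of_nat j)) + (y * P + y^2) - (1 + of_nat j) * (P - (1 + of_nat j)))"
      by simp
  qed
  have "punit p (2 * Y)"
  proof -
    have "\<not> int p dvd 2" using p2 by (auto dest: zdvd_imp_le)
    then show ?thesis using punit_mult[OF pp punit_int[OF pp, of 2] Yu] by simp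
  qed
  then have sumu: "punit p (X + Y)" using punit_add_pdvd[OF pp _ XY1, of "2 * Y"] by (simp add: algebra_simps)
  then have "X + Y \<noteq> 0" unfolding punit_def by auto
  then have "X - Y = (X * X - Y * Y) * inverse (X + Y)" by (simp add: field_simps)
  then have XY2: "pdvd p 2 (X - Y)" using sq sumu unfolding punit_def by (simp add: pdvd_multZ[OF pp])
  have X0: "X \<noteq> 0" using Xu unfolding punit_def by auto
  have "Y / X - 1 = - ((X - Y) * inverse X)" using X0 by (simp add: field_simps)
  then have "pdvd p 2 (Y / X - 1)" using XY2 Xu unfolding punit_def by (simp add: pdvd_multZ[OF pp] pdvd_uminus)
  moreover have "in_Zp p (Y / X)" using ZY Xu unfolding punit_def by (simp add: divide_inverse Zp_mult[OF pp])
  ultimately have "pdvd p 2 ((Y / X) ^ n - 1)" using pow_cong1[OF pp] by blast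
  moreover have "ee n y p = (Y / X) ^ n" unfolding ee_def X_def Y_def ..
  ultimately show ?thesis unfolding y_def by simp
qed

lemma poch_punit:
  fixes p n t :: nat
  assumes pp: "prime p" and n0: "0 < n" and np: "n < p" and tp: "t \<le> p - 1"
  shows "punit p (pochhammer (of_nat p / of_nat n + 1) t)"
proof -
  have "pochhammer (of_nat p / of_nat n + 1) t = (\<Prod>j\<in>{0..<t}. of_nat p / of_nat n + of_int (int (1 + j)))"
    unfolding pochhammer_prod by (simp add: add.assoc)
  also have "punit p \<dots>"
  proof (intro punit_prod[OF pp] yunit[OF pp n0 np])
    fix j assume "j \<in> {0..<t}"
    then have "0 < 1 + j" "1 + j < p" using tp by auto
    then show "\<not> int p dvd int (1 + j)" by (auto dest: zdvd_imp_le)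
  qed
  finally show ?thesis .
qed

lemma ee_Zp:
  fixes p n t :: nat
  assumes pp: "prime p" and n0: "0 < n" and np: "n < p" and tp: "t \<le> p"
  shows "in_Zp p (ee n (of_nat p / of_nat n) t)"
proof -
  have u: "punit p (pochhammer (of_nat p / of_nat n + 1) (t - 1))" using poch_punit[OF pp n0 np] tp by simp
  have "ee n (of_nat p / of_nat n) t = (fact (t - 1) * inverse (pochhammer (of_nat p / of_nat n + 1) (t - 1))) ^ n"
    unfolding ee_def by (simp add: divide_inverse)
  moreover have "in_Zp p (fact (t - 1))" using Zp_of_nat[OF pp, of "fact (t - 1)"] unfolding of_nat_fact .
  ultimately show ?thesis using u unfolding punit_def by (simp add: Zp_power[OF pp] Zp_mult[OF pp])
qed

lemma main_sum:
  fixes n q p :: nat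
  defines "Qh \<equiv> (\<Prod>j<q-1. [:of_nat j, 1:]) ^ n"
  assumes pp: "prime p" and n3: "n \<ge> 3" and q2: "q \<ge> 2" and par: "even n \<or> odd q"
    and pbig: "n * (q - 1) + 2 \<le> p" and np: "n < p"
  shows "pdvd p 3 (\<Sum>t\<in>{1..<p}. poly Qh (of_nat t) * ee n (of_nat p / of_nat n) t)"
proof -
  define y where "y = (of_nat p / of_nat n :: rat)"
  define P where "P = (of_nat p :: rat)"
  obtain F0 F1 F2 K L where pF: "pint p F0" "pint p F1" "pint p F2" "pint p K" "pint p L"
    and s0: "\<And>x. poly F0 (x+1) = poly F0 x + poly Qh x"
    and sK: "\<And>x. poly F0 (x+1) = x * poly K x"
    and s1: "\<And>x. poly F1 (x+1) = poly F1 x + of_nat n * poly K x"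
    and s2: "\<And>x. poly F2 (x+1) = poly F2 x + poly L x"
    and sL: "\<And>x. x * poly L x = of_nat n * poly F1 x + of_nat (n choose 2) * poly K x"
    and cong: "pdvd p 3 ((poly F0 P + y * poly F1 P + y^2 * poly F2 P)
               - (poly F0 1 + y * poly F1 1 + y^2 * poly F2 1))"
    using key_polys[OF pp n3 q2 par pbig np] unfolding Qh_def y_def P_def by blast
  define Fv where "Fv x = poly F0 x + y * poly F1 x + y^2 * poly F2 x" for x
  define g where "g t = Fv (of_nat t) * ee n y t" for t
  have n0: "0 < n" using n3 by simp
  have yd: "pdvd p 1 y" unfolding y_def using pdvd_y[OF pp n0 np] .
  have Zy: "in_Zp p y" using pdvd_Zp[OF pp yd] .
  have y3: "pdvd p 3 (y^3)" using pdvd_pow[OF pp yd, of 3] by simp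
  have ZF: "in_Zp p (poly f x)" if "pint p f" "in_Zp p x" for f x using pint_poly[OF pp that] .
  obtain m where m: "n = m + 3" using le_Suc_ex[OF n3] by (auto simp: add.commute)
  have per: "pdvd p 3 (poly Qh (of_nat t) * ee n y t - (g (Suc t) - g t))" if t: "t \<in> {1..<p}" for t
  proof -
    define s where "s = (of_nat t :: rat)"
    define T where "T = s + y"
    have Zs: "in_Zp p s" unfolding s_def using Zp_of_nat[OF pp] .
    have Zs1: "in_Zp p (s + 1)" using Zp_add[OF pp Zs Zp_1[OF pp]] .
    have Tu: "punit p T"
    proof -
      have "\<not> int p dvd int t" using t by (auto dest: zdvd_imp_le)
      then show ?thesis using yunit[OF pp n0 np, of "int t"] unfolding T_def s_def y_def by (simp add: add.commute)
    qed
    have T0: "T \<noteq> 0" using Tu unfolding punit_def by auto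
    define e where "e = ee n y t"
    have Ze: "in_Zp p e" unfolding e_def y_def using ee_Zp[OF pp n0 np] t by simp
    have eS: "ee n y (Suc t) = e * (s / T) ^ n" unfolding e_def s_def T_def using ee_Suc[of t n y] t by simp
    define U where "U = (\<Sum>k\<in>{3..n}. of_nat (n choose k) * y^(k-3) * s^(n-k))"
    have ZU: "in_Zp p U" unfolding U_def
      by (intro Zp_sum[OF pp] Zp_mult[OF pp] Zp_power[OF pp] Zp_of_nat[OF pp] Zy Zs)
    have bin: "T^n = s^(m+3) + of_nat n * s^(m+2) * y + of_nat (n choose 2) * s^(m+1) * y^2 + y^3 * U"
      unfolding T_def U_def using binom3[OF n3, of s y] m by simp
    define W where "W = of_nat (n choose 2) * s^(m+1) * poly F1 s + of_nat n * s^(m+2) * poly F2 s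
       + y * of_nat (n choose 2) * s^(m+1) * poly F2 s + (poly F0 (s+1) + y * poly F1 s + y^2 * poly F2 s) * U"
    have ZW: "in_Zp p W" unfolding W_def
      by (intro Zp_add[OF pp] Zp_mult[OF pp] Zp_power[OF pp] Zp_of_nat[OF pp] Zy Zs ZU ZF pF Zs1)
    have B: "Fv (s+1) * s^(m+3) - (Fv s + poly Qh s) * T^n = -(y^3 * W)"
    proof -
      have "Fv (s+1) * s^(m+3) - (Fv s + poly Qh s) * T^n =
        (poly F0 (s+1) + y * poly F1 (s+1) + y^2 * poly F2 (s+1)) * s^(m+3)
        - (poly F0 (s+1) + y * poly F1 s + y^2 * poly F2 s) * (s^(m+3) + of_nat n * s^(m+2) * y + of_nat (n choose 2) * s^(m+1) * y^2 + y^3 * U)"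
        unfolding Fv_def bin s0 by (simp add: algebra_simps)
      also have "\<dots> = -(y^3 * W)" unfolding W_def
        by (rule step_alg[OF sK s1 s2 sL])
      finally show ?thesis .
    qed
    have gS: "g (Suc t) = Fv (s+1) * (e * (s / T) ^ n)" unfolding g_def eS s_def by (simp add: add.commute)
    have gt: "g t = Fv s * e" unfolding g_def e_def s_def ..
    have "poly Qh (of_nat t) * ee n y t - (g (Suc t) - g t) = e * inverse T ^ n * (-(Fv (s+1) * s^(m+3) - (Fv s + poly Qh s) * T^n))"
      unfolding gS gt e_def[symmetric] s_def[symmetric] using T0 m
      by (simp add: field_simps power_divide)
    also have "\<dots> = e * inverse T ^ n * (y^3 * W)" unfolding B by simp
    finally have eq: "poly Qh (of_nat t) * ee n y t - (g (Suc t) - g t) = e * inverse T ^ n * (y^3 * W)" .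
    have "pdvd p 3 (e * inverse T ^ n * (y^3 * W))"
      using Ze Tu ZW y3 unfolding punit_def
      by (intro pdvd_multZ'[OF pp] pdvd_multZ[OF pp] Zp_mult[OF pp] Zp_power[OF pp]) auto
    then show ?thesis unfolding eq .
  qed
  have "pdvd p 3 (\<Sum>t\<in>{1..<p}. poly Qh (of_nat t) * ee n y t - (g (Suc t) - g t))"
    using per by (intro pdvd_sum[OF pp]) auto
  moreover have "(\<Sum>t\<in>{1..<p}. g (Suc t) - g t) = g p - g 1"
    using sum_Suc_diff'[of 1 p g] np by simp
  ultimately have A: "pdvd p 3 ((\<Sum>t\<in>{1..<p}. poly Qh (of_nat t) * ee n y t) - (g p - g 1))"
    by (simp add: sum_subtractf)
  have F01: "poly F0 1 = 0" using sK[of 0] by simp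
  have g1: "g 1 = Fv 1" unfolding g_def using ee_1[of n y] by simp
  have gp: "g p = Fv P * ee n y p" unfolding g_def P_def ..
  have "g p - g 1 = (Fv P - Fv 1) * ee n y p + (y * (poly F1 1 + y * poly F2 1)) * (ee n y p - 1)"
    unfolding g1 gp Fv_def F01 by (simp add: algebra_simps power2_eq_square)
  moreover have "pdvd p 3 ((Fv P - Fv 1) * ee n y p)"
    using cong ee_Zp[OF pp n0 np, of p] unfolding Fv_def y_def by (intro pdvd_multZ[OF pp]) auto
  moreover have "pdvd p 3 ((y * (poly F1 1 + y * poly F2 1)) * (ee n y p - 1))"
  proof -
    have "pdvd p 1 (y * (poly F1 1 + y * poly F2 1))"
      using yd pF Zy by (intro pdvd_multZ[OF pp] Zp_add[OF pp] Zp_mult[OF pp] ZF Zp_1[OF pp]) auto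
    moreover have "pdvd p 2 (ee n y p - 1)" unfolding y_def using ee_p[OF pp n0 np] n3 np by simp
    ultimately show ?thesis using pdvd_mult[OF pp] by fastforce
  qed
  ultimately have "pdvd p 3 (g p - g 1)" by (simp add: pdvd_add[OF pp])
  with A have "pdvd p 3 ((\<Sum>t\<in>{1..<p}. poly Qh (of_nat t) * ee n y t) - (g p - g 1) + (g p - g 1))"
    using pdvd_add[OF pp] by blast
  then show ?thesis unfolding y_def by simp
qed

lemma small_not_dvd: fixes c :: int assumes "c \<noteq> 0" "\<bar>c\<bar> < int p" shows "\<not> int p dvd c"
  using dvd_imp_le_int[OF assms(1)] assms(2) by force

lemma poch_a_punit:
  fixes p n q k :: nat
  assumes pp: "prime p" and n0: "0 < n" and np: "n < p"
    and h: "\<And>j. j < k \<Longrightarrow> \<not> int p dvd (int j + 2 - int q)"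
  shows "punit p (pochhammer (of_nat p / of_nat n - of_nat q + 2) k)"
proof -
  have "pochhammer (of_nat p / of_nat n - of_nat q + 2 :: rat) k
      = (\<Prod>j\<in>{0..<k}. of_nat p / of_nat n + of_int (int j + 2 - int q))"
    unfolding pochhammer_prod by (intro prod.cong) (auto simp: algebra_simps)
  also have "punit p \<dots>"
    using h by (intro punit_prod[OF pp] yunit[OF pp n0 np]) auto
  finally show ?thesis .
qed

lemma term_small:
  fixes p n q k :: nat
  assumes pp: "prime p" and n3: "3 \<le> n" and np: "n < p"
    and h: "\<And>j. j < k \<Longrightarrow> \<not> int p dvd (int j + 2 - int q)"
  shows "pdvd p 3 ((of_nat p)^n * ((pochhammer (1::rat) k) ^ n /
               (pochhammer (of_nat p / of_nat n - of_nat q + 2) k) ^ n))"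
proof -
  have u: "punit p (pochhammer (of_nat p / of_nat n - of_nat q + 2) k)"
    using poch_a_punit[OF pp _ np h] n3 by simp
  have Zf0: "in_Zp p (fact k :: rat)"
    using Zp_of_nat[OF pp, of "fact k"] unfolding of_nat_fact .
  have Zf: "in_Zp p (pochhammer (1::rat) k)" using Zf0 by (simp add: pochhammer_fact)
  have "(pochhammer (1::rat) k) ^ n / (pochhammer (of_nat p / of_nat n - of_nat q + 2) k) ^ n
      = (pochhammer 1 k * inverse (pochhammer (of_nat p / of_nat n - of_nat q + 2) k)) ^ n"
    by (simp add: power_mult_distrib divide_inverse power_inverse)
  moreover have "in_Zp p \<dots>" using u Zf unfolding punit_def by (simp add: Zp_power[OF pp] Zp_mult[OF pp])
  moreover have "pdvd p 3 ((of_nat p)^n)" using pdvd_p_pow[OF pp, of n] pdvd_mono[OF pp n3] by blast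
  ultimately show ?thesis by (simp add: pdvd_multZ[OF pp])
qed

theorem theorem1p2:
  fixes n q p :: nat
  assumes "n > 2" and "q > 0" and "even n \<or> odd q"
    and "prime p" and "p > max n ((q - 1) * n + 1)"
  shows "rat_cong ((of_nat p) ^ n *
            (\<Sum>k = 0..p - 1. (pochhammer (1::rat) k) ^ n /
               (pochhammer (of_nat p / of_nat n - of_nat q + 2) k) ^ n)) 0 p 3"
proof -
  have pp: "prime p" and n3: "3 \<le> n" and np: "n < p" and pbig: "n * (q - 1) + 2 \<le> p"
    and par: "even n \<or> odd q"
    using assms by (auto simp: mult.commute)
  have n0: "0 < n" using n3 by simp
  define a where "a = (of_nat p / of_nat n - of_nat q + 2 :: rat)"
  define P where "P = (of_nat p :: rat)"
  define y where "y = P / of_nat n"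
  define \<tau> where "\<tau> k = P ^ n * ((pochhammer (1::rat) k) ^ n / (pochhammer a k) ^ n)" for k
  have sum_eq: "P ^ n * (\<Sum>k = 0..p - 1. (pochhammer (1::rat) k) ^ n / (pochhammer a k) ^ n)
      = (\<Sum>k = 0..p - 1. \<tau> k)" unfolding \<tau>_def by (simp add: sum_distrib_left)
  have goal: "pdvd p 3 (\<Sum>k = 0..p - 1. \<tau> k)"
  proof (cases "q = 1")
    case True
    show ?thesis
    proof (intro pdvd_sum[OF pp])
      fix k assume k: "k \<in> {0..p-1}"
      have "\<not> int p dvd (int j + 2 - int q)" if "j < k" for j
        using that k True by (intro small_not_dvd) auto
      then show "pdvd p 3 (\<tau> k)" unfolding \<tau>_def P_def a_def using term_small[OF pp n3 np] by blast
    qed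
  next
    case False
    then have q2: "q \<ge> 2" using assms(2) by simp
    have "1 * (q - 1) \<le> n * (q - 1)" using n3 by (intro mult_le_mono1) simp
    then have qp: "q < p" using pbig q2 by linarith
    define Qh where "Qh = (\<Prod>j<q-1. [:of_nat j, 1 :: rat:]) ^ n"
    define V where "V = pochhammer a (q - 2)"
    have Vu: "punit p V" unfolding V_def a_def
    proof (rule poch_a_punit[OF pp n0 np])
      fix j assume "j < q - 2"
      then show "\<not> int p dvd (int j + 2 - int q)" using q2 qp by (intro small_not_dvd) auto
    qed
    have V0: "V \<noteq> 0" using Vu unfolding punit_def by auto
    have y0: "y \<noteq> 0" unfolding y_def P_def using n0 np by simp
    have aq: "a + of_nat (q - 2) = y" unfolding a_def y_def P_def using q2 by (simp add: of_nat_diff)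
    have split: "(\<Sum>k = 0..p - 1. \<tau> k) = (\<Sum>k\<in>{0..<q-1}. \<tau> k) + (\<Sum>k\<in>{q-1..p-1}. \<tau> k)"
    proof -
      have "{0..p-1} = {0..<q-1} \<union> {q-1..p-1}" using q2 qp by auto
      moreover have "sum \<tau> ({0..<q-1} \<union> {q-1..p-1}) = sum \<tau> {0..<q-1} + sum \<tau> {q-1..p-1}"
        by (rule sum.union_disjoint) auto
      ultimately show ?thesis by simp
    qed
    have A: "pdvd p 3 (\<Sum>k\<in>{0..<q-1}. \<tau> k)"
    proof (intro pdvd_sum[OF pp])
      fix k assume k: "k \<in> {0..<q-1}"
      have "\<not> int p dvd (int j + 2 - int q)" if "j < k" for j
        using that k q2 qp by (intro small_not_dvd) auto
      then show "pdvd p 3 (\<tau> k)" unfolding \<tau>_def P_def a_def using term_small[OF pp n3 np] by blast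
    qed
    have shift: "(\<Sum>k\<in>{q-1..p-1}. \<tau> k) = (\<Sum>t\<in>{1..p-q+1}. \<tau> (t + (q - 2)))"
    proof -
      have "{q-1..p-1} = {1 + (q-2)..(p-q+1) + (q-2)}" using q2 qp by auto
      then show ?thesis using sum.shift_bounds_cl_nat_ivl[of \<tau> 1 "q-2" "p-q+1"] by simp
    qed
    define C where "C = of_nat n ^ n * inverse V ^ n"
    have ZC: "in_Zp p C" unfolding C_def using Vu unfolding punit_def
      by (simp add: Zp_mult[OF pp] Zp_power[OF pp] Zp_of_nat[OF pp])
    have tau_t: "\<tau> (t + (q - 2)) = C * (poly Qh (of_nat t) * ee n y t)" if t: "t \<ge> 1" for t
    proof -
      have f: "pochhammer (1::rat) (t + (q - 2)) = fact (t - 1) * pochhammer (of_nat t) (q - 1)"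
      proof -
        have "t + (q - 2) = (t - 1) + (q - 1)" using t q2 by simp
        then have "pochhammer (1::rat) (t + (q - 2)) = pochhammer 1 (t - 1) * pochhammer (1 + of_nat (t - 1)) (q - 1)"
          using pochhammer_product'[of "1::rat" "t-1" "q-1"] by simp
        moreover have "1 + of_nat (t - 1) = (of_nat t :: rat)" using t by (simp add: of_nat_diff)
        ultimately show ?thesis by (simp add: pochhammer_fact)
      qed
      have g: "pochhammer a (t + (q - 2)) = V * (y * pochhammer (y + 1) (t - 1))"
      proof -
        have "pochhammer a (t + (q - 2)) = pochhammer a ((q - 2) + t)" by (simp add: add.commute)
        also have "\<dots> = V * pochhammer y t" unfolding V_def using pochhammer_product'[of a "q-2" t] aq by simp
        also have "pochhammer y t = y * pochhammer (y + 1) (t - 1)"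
          using t pochhammer_rec[of y "t - 1"] by simp
        finally show ?thesis .
      qed
      have pq: "poly Qh (of_nat t) = (pochhammer (of_nat t) (q - 1)) ^ n"
        unfolding Qh_def poly_power poly_Ph ..
      have pu: "pochhammer (y + 1) (t - 1) \<noteq> 0 \<or> True" by simp
      have Pn: "P = of_nat n * y" unfolding y_def using n0 by simp
      show ?thesis unfolding \<tau>_def f g pq C_def ee_def Pn
        using V0 y0 n0 by (simp add: field_simps power_mult_distrib power_divide)
    qed
    have B: "(\<Sum>t\<in>{1..p-q+1}. \<tau> (t + (q - 2))) = C * ((\<Sum>t\<in>{1..<p}. poly Qh (of_nat t) * ee n y t)
        - (\<Sum>t\<in>{p-q+2..<p}. poly Qh (of_nat t) * ee n y t))"
    proof -
      have "(\<Sum>t\<in>{1..p-q+1}. \<tau> (t + (q - 2))) = (\<Sum>t\<in>{1..<p-q+2}. C * (poly Qh (of_nat t) * ee n y t))"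
        using tau_t by (intro sum.cong) auto
      also have "\<dots> = C * (\<Sum>t\<in>{1..<p-q+2}. poly Qh (of_nat t) * ee n y t)" by (rule sum_distrib_left[symmetric])
      also have "(\<Sum>t\<in>{1..<p-q+2}. poly Qh (of_nat t) * ee n y t) = (\<Sum>t\<in>{1..<p}. poly Qh (of_nat t) * ee n y t)
        - (\<Sum>t\<in>{p-q+2..<p}. poly Qh (of_nat t) * ee n y t)"
        using sum.atLeastLessThan_concat[of 1 "p-q+2" p "\<lambda>t. poly Qh (of_nat t) * ee n y t"] q2 qp
        by (simp add: algebra_simps)
      finally show ?thesis .
    qed
    have M: "pdvd p 3 (\<Sum>t\<in>{1..<p}. poly Qh (of_nat t) * ee n y t)"
      using main_sum[OF pp n3 q2 par pbig np] unfolding Qh_def y_def P_def .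
    have R: "pdvd p 3 (\<Sum>t\<in>{p-q+2..<p}. poly Qh (of_nat t) * ee n y t)"
    proof (intro pdvd_sum[OF pp])
      fix t assume t: "t \<in> {p-q+2..<p}"
      define j0 where "j0 = p - t"
      have j0: "j0 \<in> {..<q-1}" "t + j0 = p" using t q2 unfolding j0_def by auto
      have "pochhammer (of_nat t :: rat) (q - 1) = (\<Prod>j\<in>{..<q-1}. of_nat t + of_nat j)"
        unfolding pochhammer_prod by (simp add: atLeast0LessThan)
      also have "\<dots> = (of_nat t + of_nat j0) * (\<Prod>j\<in>{..<q-1} - {j0}. of_nat t + of_nat j)"
        using j0(1) by (simp add: prod.remove)
      also have "of_nat t + of_nat j0 = (of_nat p :: rat)" using j0(2) by (metis of_nat_add)
      finally have pe: "pochhammer (of_nat t :: rat) (q - 1) = of_nat p * (\<Prod>j\<in>{..<q-1} - {j0}. of_nat t + of_nat j)" .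
      have "pdvd p 1 (pochhammer (of_nat t :: rat) (q - 1))" unfolding pe
        by (intro pdvd_multZ[OF pp] pdvd_p[OF pp] Zp_prod[OF pp] Zp_add[OF pp] Zp_of_nat[OF pp])
      then have "pdvd p n (poly Qh (of_nat t))"
        unfolding Qh_def poly_power poly_Ph using pdvd_pow[OF pp, of 1 _ n] by simp
      then have "pdvd p 3 (poly Qh (of_nat t))" using pdvd_mono[OF pp n3] by blast
      moreover have "in_Zp p (ee n y t)" unfolding y_def P_def using ee_Zp[OF pp n0 np] t by simp
      ultimately show "pdvd p 3 (poly Qh (of_nat t) * ee n y t)" by (simp add: pdvd_multZ[OF pp])
    qed
    have "pdvd p 3 (C * ((\<Sum>t\<in>{1..<p}. poly Qh (of_nat t) * ee n y t)
        - (\<Sum>t\<in>{p-q+2..<p}. poly Qh (of_nat t) * ee n y t)))"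
      using M R ZC by (intro pdvd_multZ'[OF pp] pdvd_diff[OF pp])
    then have "pdvd p 3 (\<Sum>k\<in>{q-1..p-1}. \<tau> k)" unfolding shift B .
    then show ?thesis unfolding split using A pdvd_add[OF pp] by blast
  qed
  then obtain z where "in_Zp p z" "(\<Sum>k = 0..p - 1. \<tau> k) = of_nat p ^ 3 * z" unfolding pdvd_def by blast
  then show ?thesis unfolding rat_cong_def using sum_eq unfolding P_def a_def by auto
qed

end
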